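(* Let $\mathcal{X}$ and $\mathcal{Z}$ be compact Hausdorff spaces equipped with their Borel $\sigma$-algebras, let $f\colon\mathcal{X}\to\mathcal{Z}$ be continuous, and let $k_x$, $k_z$ be continuous (bounded, positive definite) kernels on $\mathcal{X}$ and $\mathcal{Z}$ respectively, with $k_x$ $c_0$-universal. Let $X$ be a random variable on $\mathcal{X}$ with distribution $P$. For each $n\in\mathbb{N}$ let $\hat X_n=\{(x_i,w_i)\}_{i=1}^n$ be a weighted sample with $x_i\in\mathcal{X}$, $w_i\in\mathbb{R}$ (both possibly depending on $n$), and assume there is a constant $C$ independent of $n$ with $\sum_{i=1}^n |w_i|\le C$ for all $n$. Then \[ \text{if}\quad \Big\|\hat\mu^{k_x}_{X}-\mu^{k_x}_{X}\Big\|_{\mathcal{H}_{k_x}}\to 0 \quad\text{then}\quad \Big\|\hat\mu^{k_z}_{f(X)}-\mu^{k_z}_{f(X)}\Big\|_{\mathcal{H}_{k_z}}\to 0 \qquad (n\to\infty). \]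
   Context: For a kernel $k$ on a space $\mathcal{X}$ with RKHS $\mathcal{H}_k$, the kernel mean embedding of $X\sim P$ is $\mu^k_X:=\int k(x,\cdot)\,dP(x)\in\mathcal{H}_k$ and the estimator from the weighted sample is $\hat\mu^k_X:=\sum_{i=1}^n w_i k(x_i,\cdot)$. For $f\colon\mathcal{X}\to\mathcal{Z}$ and a kernel $k_z$ on $\mathcal{Z}$: $\mu^{k_z}_{f(X)}:=\int k_z(f(x),\cdot)\,dP(x)$ and $\hat\mu^{k_z}_{f(X)}:=\sum_{i=1}^n w_i k_z(f(x_i),\cdot)$. A kernel $k$ on a locally compact Hausdorff space is $c_0$-universal if its RKHS is contained in and dense in $C_0(\mathcal{X})$ (continuous functions vanishing at infinity, with the sup norm); on a compact space this means density in $C(\mathcal{X})$. *)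

theory Defs
  imports "HOL-Probability.Probability"
begin

definition pos_def_kernel :: "('a \<Rightarrow> 'a \<Rightarrow> real) \<Rightarrow> bool" where
  "pos_def_kernel k \<longleftrightarrow> (\<forall>x y. k x y = k y x) \<and>
     (\<forall>(n::nat) (c::nat \<Rightarrow> real) (p::nat \<Rightarrow> 'a).
        0 \<le> (\<Sum>i<n. \<Sum>j<n. c i * c j * k (p i) (p j)))"

definition is_RKHS ::
  "('a \<Rightarrow> 'a \<Rightarrow> real) \<Rightarrow> ('a \<Rightarrow> real) set \<Rightarrow> (('a \<Rightarrow> real) \<Rightarrow> ('a \<Rightarrow> real) \<Rightarrow> real) \<Rightarrow> bool" where
  "is_RKHS k H ip \<longleftrightarrow>
     (\<lambda>_. 0) \<in> H \<and>
     (\<forall>g\<in>H. \<forall>h\<in>H. (\<lambda>y. g y + h y) \<in> H) \<and>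
     (\<forall>c. \<forall>g\<in>H. (\<lambda>y. c * g y) \<in> H) \<and>
     (\<forall>g\<in>H. \<forall>h\<in>H. ip g h = ip h g) \<and>
     (\<forall>g\<in>H. \<forall>h\<in>H. \<forall>u\<in>H. ip (\<lambda>y. g y + h y) u = ip g u + ip h u) \<and>
     (\<forall>c. \<forall>g\<in>H. \<forall>h\<in>H. ip (\<lambda>y. c * g y) h = c * ip g h) \<and>
     (\<forall>g\<in>H. 0 \<le> ip g g \<and> (ip g g = 0 \<longrightarrow> g = (\<lambda>_. 0))) \<and>
     (\<forall>s. (\<forall>n. s n \<in> H) \<and>
          (\<forall>e>0. \<exists>N. \<forall>m\<ge>N. \<forall>n\<ge>N.
              sqrt (ip (\<lambda>y. s m y - s n y) (\<lambda>y. s m y - s n y)) < e)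
          \<longrightarrow> (\<exists>g\<in>H. (\<lambda>n. sqrt (ip (\<lambda>y. s n y - g y) (\<lambda>y. s n y - g y)))
                         \<longlonglongrightarrow> 0)) \<and>
     (\<forall>x. k x \<in> H) \<and>
     (\<forall>g\<in>H. \<forall>x. ip g (k x) = g x)"

definition rkhs_norm :: "(('a \<Rightarrow> real) \<Rightarrow> ('a \<Rightarrow> real) \<Rightarrow> real) \<Rightarrow> ('a \<Rightarrow> real) \<Rightarrow> real" where
  "rkhs_norm ip g = sqrt (ip g g)"

definition C0_functions :: "('a::topological_space \<Rightarrow> real) set" where
  "C0_functions = {g. continuous_on UNIV g \<and>
     (\<forall>e>0. \<exists>K. compact K \<and> (\<forall>x. x \<notin> K \<longrightarrow> \<bar>g x\<bar> < e))}"

definition c0_universal :: "('a::topological_space \<Rightarrow> real) set \<Rightarrow> bool" where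
  "c0_universal H \<longleftrightarrow> H \<subseteq> C0_functions \<and>
     (\<forall>g\<in>C0_functions. \<forall>e>0. \<exists>h\<in>H. \<forall>x. \<bar>g x - h x\<bar> < e)"

text \<open>Kernel mean embedding of f(X), X ~ P (as a function, i.e. evaluated pointwise):
  mu(z) = integral of k(f x, z) dP(x).  With f = id this is mu^k_X.\<close>
definition kme :: "('b \<Rightarrow> 'b \<Rightarrow> real) \<Rightarrow> ('a \<Rightarrow> 'b) \<Rightarrow> 'a measure \<Rightarrow> 'b \<Rightarrow> real" where
  "kme k f P = (\<lambda>z. \<integral>x. k (f x) z \<partial>P)"

definition kme_est :: "('b \<Rightarrow> 'b \<Rightarrow> real) \<Rightarrow> ('a \<Rightarrow> 'b) \<Rightarrow> (nat \<Rightarrow> 'a) \<Rightarrow> (nat \<Rightarrow> real) \<Rightarrow> nat \<Rightarrow> 'b \<Rightarrow> real" where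
  "kme_est k f x w n = (\<lambda>z. \<Sum>i=1..n. w i * k (f (x i)) z)"

end

theory Submission
  imports Defs
begin

locale rkhs =
  fixes k :: "'b \<Rightarrow> 'b \<Rightarrow> real" and H :: "('b \<Rightarrow> real) set" and ip
  assumes R: "is_RKHS k H ip"
begin

definition nrm where "nrm g = sqrt (ip g g)"

lemmas RR = R[unfolded is_RKHS_def, THEN conjunct1] R[unfolded is_RKHS_def, THEN conjunct2, THEN conjunct1] R[unfolded is_RKHS_def, THEN conjunct2, THEN conjunct2, THEN conjunct1] R[unfolded is_RKHS_def, THEN conjunct2, THEN conjunct2, THEN conjunct2, THEN conjunct1] R[unfolded is_RKHS_def, THEN conjunct2, THEN conjunct2, THEN conjunct2, THEN conjunct2, THEN conjunct1] R[unfolded is_RKHS_def, THEN conjunct2, THEN conjunct2, THEN conjunct2, THEN conjunct2, THEN conjunct2, THEN conjunct1] R[unfolded is_RKHS_def, THEN conjunct2, THEN conjunct2, THEN conjunct2, THEN conjunct2, THEN conjunct2, THEN conjunct2, THEN conjunct1] R[unfolded is_RKHS_def, THEN conjunct2, THEN conjunct2, THEN conjunct2, THEN conjunct2, THEN conjunct2, THEN conjunct2, THEN conjunct2, THEN conjunct1] R[unfolded is_RKHS_def, THEN conjunct2, THEN conjunct2, THEN conjunct2, THEN conjunct2, THEN conjunct2, THEN conjunct2, THEN conjunct2, THEN conjunct2, THEN conjunct1] R[unfolded is_RKHS_def, THEN conjunct2, THEN conjunct2, THEN conjunct2, THEN conjunct2, THEN conjunct2, THEN conjunct2, THEN conjunct2,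 THEN conjunct2, THEN conjunct2]

lemma zero_in: "(\<lambda>_. 0) \<in> H" using RR(1) .
lemma add_in: "g \<in> H \<Longrightarrow> h \<in> H \<Longrightarrow> (\<lambda>y. g y + h y) \<in> H" using RR(2) by simp
lemma scale_in: "g \<in> H \<Longrightarrow> (\<lambda>y. c * g y) \<in> H" using RR(3) by simp
lemma sym: "g \<in> H \<Longrightarrow> h \<in> H \<Longrightarrow> ip g h = ip h g" using RR(4) by simp
lemma add_left: "g \<in> H \<Longrightarrow> h \<in> H \<Longrightarrow> u \<in> H \<Longrightarrow> ip (\<lambda>y. g y + h y) u = ip g u + ip h u"
  using RR(5) by simp
lemma scale_left: "g \<in> H \<Longrightarrow> h \<in> H \<Longrightarrow> ip (\<lambda>y. c * g y) h = c * ip g h"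
  using RR(6) by simp
lemma pos: "g \<in> H \<Longrightarrow> 0 \<le> ip g g" using RR(7) by simp
lemma def0: "g \<in> H \<Longrightarrow> ip g g = 0 \<Longrightarrow> g = (\<lambda>_. 0)" using RR(7) by simp
lemma k_in: "k x \<in> H" using RR(9) by simp
lemma repr: "g \<in> H \<Longrightarrow> ip g (k x) = g x" using RR(10) by simp
lemma complete: assumes "\<And>n. s n \<in> H" "\<And>e. e>0 \<Longrightarrow> \<exists>N. \<forall>m\<ge>N. \<forall>n\<ge>N.
              sqrt (ip (\<lambda>y. s m y - s n y) (\<lambda>y. s m y - s n y)) < e"
  shows "\<exists>g\<in>H. (\<lambda>n. sqrt (ip (\<lambda>y. s n y - g y) (\<lambda>y. s n y - g y))) \<longlonglongrightarrow> 0"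
proof -
  have "(\<forall>n. s n \<in> H) \<and> (\<forall>e>0. \<exists>N. \<forall>m\<ge>N. \<forall>n\<ge>N.
              sqrt (ip (\<lambda>y. s m y - s n y) (\<lambda>y. s m y - s n y)) < e)"
    using assms by simp
  then show ?thesis using RR(8) by simp
qed

lemma diff_in: "g \<in> H \<Longrightarrow> h \<in> H \<Longrightarrow> (\<lambda>y. g y - h y) \<in> H"
proof -
  assume "g \<in> H" "h \<in> H"
  then have "(\<lambda>y. g y + (-1) * h y) \<in> H" by (intro add_in scale_in)
  then show ?thesis by simp
qed

lemma add_right: "g \<in> H \<Longrightarrow> h \<in> H \<Longrightarrow> u \<in> H \<Longrightarrow> ip u (\<lambda>y. g y + h y) = ip u g + ip u h"
proof -
  assume a: "g \<in> H" "h \<in> H" "u \<in> H"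
  have "ip u (\<lambda>y. g y + h y) = ip (\<lambda>y. g y + h y) u" using a by (intro sym add_in)
  also have "\<dots> = ip g u + ip h u" using a by (rule add_left)
  also have "\<dots> = ip u g + ip u h" using a by (simp add: sym[of g u] sym[of h u])
  finally show ?thesis .
qed
lemma scale_right: "g \<in> H \<Longrightarrow> h \<in> H \<Longrightarrow> ip h (\<lambda>y. c * g y) = c * ip h g"
proof -
  assume a: "g \<in> H" "h \<in> H"
  have "ip h (\<lambda>y. c * g y) = ip (\<lambda>y. c * g y) h" using a by (intro sym scale_in)
  also have "\<dots> = c * ip g h" using a by (rule scale_left)
  also have "\<dots> = c * ip h g" using a by (simp add: sym[of g h])
  finally show ?thesis .
qed
lemma diff_left: "g \<in> H \<Longrightarrow> h \<in> H \<Longrightarrow> u \<in> H \<Longrightarrow> ip (\<lambda>y. g y - h y) u = ip g u - ip h u"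
proof -
  assume a: "g \<in> H" "h \<in> H" "u \<in> H"
  have "ip (\<lambda>y. g y + (-1) * h y) u = ip g u + (-1) * ip h u"
    using add_left[OF a(1) scale_in[OF a(2)] a(3), of "-1"] scale_left[OF a(2) a(3), of "-1"] by (simp only:)
  moreover have "(\<lambda>y. g y + (-1) * h y) = (\<lambda>y. g y - h y)" by simp
  ultimately show ?thesis by simp
qed
lemma diff_right: "g \<in> H \<Longrightarrow> h \<in> H \<Longrightarrow> u \<in> H \<Longrightarrow> ip u (\<lambda>y. g y - h y) = ip u g - ip u h"
proof -
  assume a: "g \<in> H" "h \<in> H" "u \<in> H"
  have "ip u (\<lambda>y. g y - h y) = ip (\<lambda>y. g y - h y) u" using a by (intro sym diff_in)
  also have "\<dots> = ip g u - ip h u" using a by (rule diff_left)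
  also have "\<dots> = ip u g - ip u h" using a by (simp add: sym[of g u] sym[of h u])
  finally show ?thesis .
qed

lemma sum_in: "finite S \<Longrightarrow> (\<And>i. i \<in> S \<Longrightarrow> g i \<in> H) \<Longrightarrow> (\<lambda>y. \<Sum>i\<in>S. c i * g i y) \<in> H"
proof (induction S rule: finite_induct)
  case empty then show ?case using zero_in by simp
next
  case (insert j S)
  then have "(\<lambda>y. c j * g j y + (\<Sum>i\<in>S. c i * g i y)) \<in> H"
    by (intro add_in scale_in) auto
  then show ?case using insert by simp
qed

lemma sum_right: "finite S \<Longrightarrow> (\<And>i. i \<in> S \<Longrightarrow> g i \<in> H) \<Longrightarrow> u \<in> H \<Longrightarrow>
   ip u (\<lambda>y. \<Sum>i\<in>S. c i * g i y) = (\<Sum>i\<in>S. c i * ip u (g i))"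
proof (induction S rule: finite_induct)
  case empty
  have "ip u (\<lambda>y. 0 * u y) = 0 * ip u u" using empty by (intro scale_right) auto
  then show ?case by simp
next
  case (insert j S)
  have "ip u (\<lambda>y. c j * g j y + (\<Sum>i\<in>S. c i * g i y)) = ip u (\<lambda>y. c j * g j y) + ip u (\<lambda>y. (\<Sum>i\<in>S. c i * g i y))"
    using insert by (intro add_right scale_in sum_in) auto
  also have "\<dots> = c j * ip u (g j) + (\<Sum>i\<in>S. c i * ip u (g i))"
    using insert by (simp add: scale_right)
  finally show ?case using insert by simp
qed

lemma nrm_nonneg: "g \<in> H \<Longrightarrow> 0 \<le> nrm g" unfolding nrm_def by (simp add: pos)

lemma nrm_sq: "g \<in> H \<Longrightarrow> nrm g ^ 2 = ip g g" unfolding nrm_def using pos by simp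

lemma quad: assumes "g \<in> H" "h \<in> H"
  shows "0 \<le> ip g g - 2 * t * ip g h + t^2 * ip h h"
proof -
  have m: "(\<lambda>y. g y - t * h y) \<in> H" using assms by (intro diff_in scale_in)
  have "0 \<le> ip (\<lambda>y. g y - t * h y) (\<lambda>y. g y - t * h y)" using m pos by blast
  also have "\<dots> = ip g (\<lambda>y. g y - t * h y) - t * ip h (\<lambda>y. g y - t * h y)"
    using assms m by (simp add: diff_left scale_left scale_in)
  also have "\<dots> = ip g g - 2 * t * ip g h + t^2 * ip h h"
    using assms by (simp add: diff_right scale_right scale_in sym[of g h] power2_eq_square algebra_simps)
  finally show ?thesis .
qed

lemma cs: assumes "g \<in> H" "h \<in> H" shows "\<bar>ip g h\<bar> \<le> nrm g * nrm h"
proof (cases "ip h h = 0")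
  case True
  then have "h = (\<lambda>_. 0)" using def0 assms by blast
  then have "ip g h = 0" using scale_right[OF assms(1) assms(1), of 0] by simp
  then show ?thesis using assms by (simp add: nrm_nonneg)
next
  case False
  then have hp: "ip h h > 0" using pos[OF assms(2)] by simp
  have "0 \<le> ip g g - 2 * (ip g h / ip h h) * ip g h + (ip g h / ip h h)^2 * ip h h"
    using quad[OF assms] .
  also have "\<dots> = ip g g - (ip g h)^2 / ip h h" using hp by (simp add: field_simps power2_eq_square)
  finally have "(ip g h)^2 \<le> ip g g * ip h h" using hp by (simp add: field_simps)
  then have "sqrt ((ip g h)^2) \<le> sqrt (ip g g * ip h h)" by (rule real_sqrt_le_mono)
  then show ?thesis unfolding nrm_def by (simp add: real_sqrt_mult)
qed

lemma dual: assumes "d \<in> H" "0 \<le> e" "\<And>h. h \<in> H \<Longrightarrow> \<bar>ip h d\<bar> \<le> nrm h * e"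
  shows "nrm d \<le> e"
proof -
  have "nrm d ^ 2 \<le> nrm d * e" using assms(3)[OF assms(1)] nrm_sq[OF assms(1)] by simp
  then have "nrm d * nrm d \<le> nrm d * e" by (simp add: power2_eq_square)
  then show ?thesis using nrm_nonneg[OF assms(1)] assms(2)
  proof (cases "nrm d = 0")
    case False then have "0 < nrm d" using nrm_nonneg[OF assms(1)] by simp
    then show ?thesis using \<open>nrm d * nrm d \<le> nrm d * e\<close> mult_le_cancel_left_pos by blast
  qed simp
qed

lemma ksym: "k a b = k b a" using sym[OF k_in k_in, of b a] by (simp add: repr k_in)

lemma key: assumes "h \<in> H" shows "\<bar>h b - h a\<bar> \<le> nrm h * sqrt (k a a - 2 * k a b + k b b)"
proof -
  have d: "(\<lambda>y. k b y - k a y) \<in> H" by (intro diff_in k_in)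
  have "h b - h a = ip h (\<lambda>y. k b y - k a y)"
    using assms by (simp add: diff_right k_in repr)
  moreover have "ip (\<lambda>y. k b y - k a y) (\<lambda>y. k b y - k a y) = k b b - k b a - (k a b - k a a)"
    using d by (simp add: diff_right diff_left k_in repr)
  moreover have "k b a = k a b" by (rule ksym)
  ultimately have "h b - h a = ip h (\<lambda>y. k b y - k a y)"
     "ip (\<lambda>y. k b y - k a y) (\<lambda>y. k b y - k a y) = k a a - 2 * k a b + k b b" by simp_all
  then show ?thesis using cs[OF assms d] unfolding nrm_def by simp
qed

end

lemma PU:
  fixes D :: "'a::topological_space \<Rightarrow> 'a \<Rightarrow> real"
  assumes cpt: "compact (UNIV::'a set)" and cD: "\<And>c. continuous_on UNIV (D c)"
    and D0: "\<And>c. D c c = 0" and e: "\<epsilon> > 0"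
  shows "\<exists>A (\<phi>::'a \<Rightarrow> 'a \<Rightarrow> real). finite A \<and> (\<forall>c\<in>A. continuous_on UNIV (\<phi> c)) \<and> (\<forall>c a. 0 \<le> \<phi> c a)
     \<and> (\<forall>a. (\<Sum>c\<in>A. \<phi> c a) = 1) \<and> (\<forall>c a. 0 < \<phi> c a \<longrightarrow> D c a < \<epsilon>)"
proof -
  define U where "U c = {a. D c a < \<epsilon>}" for c
  have oU: "open (U c)" for c unfolding U_def
    by (rule open_Collect_less) (auto intro: cD continuous_on_const)
  have cov: "UNIV \<subseteq> (\<Union>c\<in>UNIV. U c)" using D0 e by (auto simp: U_def)
  obtain A where A0: "A \<subseteq> UNIV" and A: "finite A" "UNIV \<subseteq> (\<Union>c\<in>A. U c)"
    by (rule compactE_image[OF cpt, of UNIV U]) (use oU cov in auto)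
  define S where "S a = (\<Sum>c\<in>A. max 0 (\<epsilon> - D c a))" for a
  have Spos: "S a > 0" for a
  proof -
    obtain c where c: "c \<in> A" "D c a < \<epsilon>" using A(2) by (auto simp: U_def)
    have "0 < max 0 (\<epsilon> - D c a)" using c by simp
    also have "\<dots> \<le> S a" unfolding S_def
      using c A(1) by (intro member_le_sum) auto
    finally show ?thesis .
  qed
  define \<phi> where "\<phi> c a = max 0 (\<epsilon> - D c a) / S a" for c a
  have cm: "continuous_on UNIV (\<lambda>a. max 0 (\<epsilon> - D c a))" for c
    by (intro continuous_on_max continuous_on_const continuous_on_diff cD)
  have cS: "continuous_on UNIV S" unfolding S_def[abs_def]
    by (rule continuous_on_sum) (rule cm)
  have f1: "continuous_on UNIV (\<phi> c)" for c
    unfolding \<phi>_def[abs_def] using Spos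
    by (intro continuous_on_divide cm cS) (metis less_irrefl)
  have f2: "0 \<le> \<phi> c a" for c a unfolding \<phi>_def using Spos[of a] by simp
  have f3: "(\<Sum>c\<in>A. \<phi> c a) = 1" for a
    unfolding \<phi>_def using Spos[of a] by (simp add: sum_divide_distrib[symmetric] S_def)
  have f4: "0 < \<phi> c a \<longrightarrow> D c a < \<epsilon>" for c a
    unfolding \<phi>_def using Spos[of a] by (auto simp: zero_less_divide_iff)
  have fin: "finite A \<and> (\<forall>c\<in>A. continuous_on UNIV (\<phi> c)) \<and> (\<forall>c a. 0 \<le> \<phi> c a)
     \<and> (\<forall>a. (\<Sum>c\<in>A. \<phi> c a) = 1) \<and> (\<forall>c a. 0 < \<phi> c a \<longrightarrow> D c a < \<epsilon>)"
    using A(1) f1 f2 f3 f4 by simp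
  show ?thesis apply (rule exI[where x=A], rule exI[where x=\<phi>]) by (rule fin)
qed

lemma PU_approx:
  fixes D :: "'a \<Rightarrow> 'a \<Rightarrow> real"
  assumes "finite A" "\<forall>c a. 0 \<le> \<phi> c a" "\<forall>a. (\<Sum>c\<in>A. \<phi> c a) = 1"
    "\<forall>c a. 0 < \<phi> c a \<longrightarrow> D c a < \<epsilon>"
    and B: "0 \<le> B" and u: "\<And>a c. \<bar>u a - u c\<bar> \<le> B * D c a"
  shows "\<bar>u a - (\<Sum>c\<in>A. \<phi> c a * u c)\<bar> \<le> B * \<epsilon>"
proof -
  have "u a - (\<Sum>c\<in>A. \<phi> c a * u c) = (\<Sum>c\<in>A. \<phi> c a * (u a - u c))"
    using assms(3) by (simp add: right_diff_distrib sum_subtractf sum_distrib_right[symmetric])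
  also have "\<bar>\<dots>\<bar> \<le> (\<Sum>c\<in>A. \<bar>\<phi> c a * (u a - u c)\<bar>)" by (rule sum_abs)
  also have "\<dots> \<le> (\<Sum>c\<in>A. \<phi> c a * (B * \<epsilon>))"
  proof (rule sum_mono)
    fix c assume "c \<in> A"
    show "\<bar>\<phi> c a * (u a - u c)\<bar> \<le> \<phi> c a * (B * \<epsilon>)"
    proof (cases "\<phi> c a = 0")
      case False
      then have p: "0 < \<phi> c a" using assms(2) by (metis order_le_less)
      then have "D c a < \<epsilon>" using assms(4) by blast
      then have "\<bar>u a - u c\<bar> \<le> B * \<epsilon>" using u[of a c] B mult_left_mono[of "D c a" \<epsilon> B]
        by linarith
      then show ?thesis using p by (simp add: abs_mult mult_left_mono)
    qed simp
  qed
  also have "\<dots> = B * \<epsilon>" using assms(3) by (simp add: sum_distrib_right[symmetric])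
  finally show ?thesis .
qed

lemma cont_borel: "sets P = sets borel \<Longrightarrow> continuous_on UNIV g \<Longrightarrow> g \<in> borel_measurable P"
  using measurable_cong_sets[of P borel borel borel] borel_measurable_continuous_onI by blast

lemma cont_bounded: fixes g :: "'a::topological_space \<Rightarrow> real"
  assumes "compact (UNIV::'a set)" "continuous_on UNIV g" shows "\<exists>B. \<forall>a. \<bar>g a\<bar> \<le> B"
proof -
  have "compact (g ` UNIV)" by (rule compact_continuous_image[OF assms(2) assms(1)])
  then have "bounded (g ` UNIV)" by (rule compact_imp_bounded)
  then show ?thesis unfolding bounded_real by blast
qed

lemma cont_integrable: fixes g :: "'a::topological_space \<Rightarrow> real"
  assumes "compact (UNIV::'a set)" "continuous_on UNIV g" "prob_space P" "sets P = sets borel"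
  shows "integrable P g"
proof -
  obtain B where B: "\<And>a. \<bar>g a\<bar> \<le> B" using cont_bounded[OF assms(1,2)] by blast
  interpret prob_space P by fact
  show ?thesis
    by (rule integrable_const_bound[where B=B]) (auto simp: B cont_borel[OF assms(4,2)])
qed

lemma int_bound: fixes g :: "'a \<Rightarrow> real"
  assumes "prob_space P" "integrable P g" "\<And>a. \<bar>g a\<bar> \<le> B"
  shows "\<bar>integral\<^sup>L P g\<bar> \<le> B"
proof -
  have ic: "integrable P (\<lambda>_. B)"
    using assms(1) by (simp add: prob_space_def finite_measure.integrable_const)
  have m1: "measure P (space P) = 1" by (rule prob_space.prob_space[OF assms(1)])
  have "integral\<^sup>L P g \<le> integral\<^sup>L P (\<lambda>_. B)"
    using assms(2,3) ic by (intro integral_mono) (auto simp: abs_le_iff)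
  moreover have "integral\<^sup>L P (\<lambda>x. - g x) \<le> integral\<^sup>L P (\<lambda>_. B)"
    using assms(2,3) ic by (intro integral_mono) (auto simp: abs_le_iff)
  moreover have "integral\<^sup>L P (\<lambda>_. B) = B" using m1 by simp
  ultimately show ?thesis using m1 by (simp add: abs_le_iff)
qed

locale rkc = rkhs k H ip for k :: "'b::t2_space \<Rightarrow> 'b \<Rightarrow> real" and H ip +
  fixes f :: "'a::t2_space \<Rightarrow> 'b" and P :: "'a measure"
  assumes ck: "continuous_on UNIV (\<lambda>(a, b). k a b)" and cpt: "compact (UNIV::'a set)"
    and cf: "continuous_on UNIV f" and ps: "prob_space P" and sP: "sets P = sets borel"
begin

definition D where "D c a = sqrt (k (f c) (f c) - 2 * k (f c) (f a) + k (f a) (f a))"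

lemma cont2: assumes "continuous_on UNIV u" "continuous_on UNIV v"
  shows "continuous_on UNIV (\<lambda>a. k (u a) (v a))"
proof -
  have "continuous_on UNIV (\<lambda>a. (\<lambda>(a, b). k a b) (u a, v a))"
    by (rule continuous_on_compose2[OF ck]) (auto intro: continuous_on_Pair assms)
  then show ?thesis by simp
qed

lemma cD: "continuous_on UNIV (D c)"
  unfolding D_def[abs_def]
  by (intro continuous_on_real_sqrt continuous_on_add continuous_on_diff continuous_on_mult
      continuous_on_const cont2 cf)

lemma D0: "D c c = 0" unfolding D_def by simp

lemma keyf: "h \<in> H \<Longrightarrow> \<bar>h (f a) - h (f c)\<bar> \<le> nrm h * D c a"
  unfolding D_def by (rule key)

lemma cont_H: assumes h: "h \<in> H" shows "continuous_on UNIV (\<lambda>a. h (f a))"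
  unfolding continuous_on_eq_continuous_at[OF open_UNIV]
proof (intro ballI)
  fix c :: 'a
  have "isCont (D c) c" using cD continuous_on_eq_continuous_at by blast
  then have "(D c \<longlongrightarrow> 0) (at c)" using D0 by (simp add: isCont_def)
  then have t: "((\<lambda>a. nrm h * D c a) \<longlongrightarrow> 0) (at c)" by (simp add: tendsto_mult_right_zero)
  have "((\<lambda>a. h (f a) - h (f c)) \<longlongrightarrow> 0) (at c)"
    by (rule Lim_null_comparison[OF _ t]) (use keyf[OF h] in auto)
  then have "((\<lambda>a. h (f a)) \<longlongrightarrow> h (f c)) (at c)" by (rule LIM_zero_cancel)
  then show "isCont (\<lambda>a. h (f a)) c" by (simp add: isCont_def)
qed

lemma intc: fixes g :: "'a \<Rightarrow> real" assumes "continuous_on UNIV g" shows "integrable P g"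
  by (rule cont_integrable[OF cpt assms ps sP])

lemma intH: "h \<in> H \<Longrightarrow> integrable P (\<lambda>a. h (f a))"
  by (rule intc[OF cont_H])

lemma PUf: "\<epsilon> > 0 \<Longrightarrow> \<exists>A (\<phi>::'a \<Rightarrow> 'a \<Rightarrow> real). finite A \<and> (\<forall>c\<in>A. continuous_on UNIV (\<phi> c)) \<and> (\<forall>c a. 0 \<le> \<phi> c a)
     \<and> (\<forall>a. (\<Sum>c\<in>A. \<phi> c a) = 1) \<and> (\<forall>c a. 0 < \<phi> c a \<longrightarrow> D c a < \<epsilon>)"
  by (rule PU[OF cpt cD D0])

end

context rkc begin

lemma approx_int:
  fixes \<phi> :: "'a \<Rightarrow> 'a \<Rightarrow> real"
  assumes PUp: "finite A" "\<forall>c\<in>A. continuous_on UNIV (\<phi> c)" "\<forall>c a. 0 \<le> \<phi> c a"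
     "\<forall>a. (\<Sum>c\<in>A. \<phi> c a) = 1" "\<forall>c a. 0 < \<phi> c a \<longrightarrow> D c a < \<epsilon>"
    and h: "h \<in> H"
  shows "\<bar>(\<integral>a. (\<Sum>c\<in>A. \<phi> c a * h (f c)) \<partial>P) - (\<integral>a. h (f a) \<partial>P)\<bar> \<le> nrm h * \<epsilon>"
    and "integrable P (\<lambda>a. (\<Sum>c\<in>A. \<phi> c a * h (f c)))"
proof -
  have cs: "continuous_on UNIV (\<lambda>a. (\<Sum>c\<in>A. \<phi> c a * h (f c)))"
    using PUp(2) by (intro continuous_on_sum continuous_on_mult continuous_on_const) auto
  show i1: "integrable P (\<lambda>a. (\<Sum>c\<in>A. \<phi> c a * h (f c)))" by (rule intc[OF cs])
  have i2: "integrable P (\<lambda>a. h (f a))" by (rule intH[OF h])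
  have b: "\<bar>(\<Sum>c\<in>A. \<phi> c a * h (f c)) - h (f a)\<bar> \<le> nrm h * \<epsilon>" for a
    using PU_approx[OF PUp(1,3,4,5) nrm_nonneg[OF h], of "\<lambda>a. h (f a)" a] keyf[OF h]
    by (simp add: abs_minus_commute)
  have "(\<integral>a. (\<Sum>c\<in>A. \<phi> c a * h (f c)) \<partial>P) - (\<integral>a. h (f a) \<partial>P)
      = (\<integral>a. (\<Sum>c\<in>A. \<phi> c a * h (f c)) - h (f a) \<partial>P)"
    using i1 i2 by simp
  also have "\<bar>\<dots>\<bar> \<le> nrm h * \<epsilon>"
    by (rule int_bound[OF ps]) (use i1 i2 b in auto)
  finally show "\<bar>(\<integral>a. (\<Sum>c\<in>A. \<phi> c a * h (f c)) \<partial>P) - (\<integral>a. h (f a) \<partial>P)\<bar> \<le> nrm h * \<epsilon>" .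
qed

lemma kme_in: "kme k f P \<in> H \<and> (\<forall>h\<in>H. ip h (kme k f P) = (\<integral>a. h (f a) \<partial>P))"
proof -
  define e where "e n = inverse (real (Suc n))" for n :: nat
  have epos: "e n > 0" for n unfolding e_def by simp
  define Q where "Q n A (\<phi>::'a \<Rightarrow> 'a \<Rightarrow> real) \<longleftrightarrow> finite A \<and> (\<forall>c\<in>A. continuous_on UNIV (\<phi> c)) \<and> (\<forall>c a. 0 \<le> \<phi> c a)
     \<and> (\<forall>a. (\<Sum>c\<in>A. \<phi> c a) = 1) \<and> (\<forall>c a. 0 < \<phi> c a \<longrightarrow> D c a < e n)" for n A \<phi>
  have "\<forall>n. \<exists>A \<phi>. Q n A \<phi>" unfolding Q_def by (intro allI) (rule PUf[OF epos])
  then have "\<exists>A. \<forall>n. \<exists>\<phi>. Q n (A n) \<phi>" by (rule choice)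
  then obtain A where "\<forall>n. \<exists>\<phi>. Q n (A n) \<phi>" by blast
  then have "\<exists>\<phi>. \<forall>n. Q n (A n) (\<phi> n)" by (rule choice)
  then obtain \<phi> where "\<forall>n. Q n (A n) (\<phi> n)" by blast
  then have AP: "\<And>n. finite (A n) \<and> (\<forall>c\<in>A n. continuous_on UNIV (\<phi> n c)) \<and> (\<forall>c a. 0 \<le> \<phi> n c a)
     \<and> (\<forall>a. (\<Sum>c\<in>A n. \<phi> n c a) = 1) \<and> (\<forall>c a. 0 < \<phi> n c a \<longrightarrow> D c a < e n)"
    unfolding Q_def by blast
  define T where "T h = (\<integral>a. h (f a) \<partial>P)" for h :: "'b \<Rightarrow> real"
  define \<nu> where "\<nu> n = (\<lambda>y. \<Sum>c\<in>A n. (\<integral>a. \<phi> n c a \<partial>P) * k (f c) y)" for n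
  have \<nu>H: "\<nu> n \<in> H" for n unfolding \<nu>_def using AP[of n] by (intro sum_in k_in) auto
  have ip\<nu>: "ip h (\<nu> n) = (\<integral>a. (\<Sum>c\<in>A n. \<phi> n c a * h (f c)) \<partial>P)" if h: "h \<in> H" for h n
  proof -
    have "ip h (\<nu> n) = (\<Sum>c\<in>A n. (\<integral>a. \<phi> n c a \<partial>P) * ip h (k (f c)))"
      unfolding \<nu>_def using AP[of n] h by (intro sum_right k_in) auto
    also have "\<dots> = (\<Sum>c\<in>A n. (\<integral>a. \<phi> n c a \<partial>P) * h (f c))" using h by (simp add: repr)
    also have "\<dots> = (\<Sum>c\<in>A n. (\<integral>a. \<phi> n c a * h (f c) \<partial>P))"
      by simp
    also have "\<dots> = (\<integral>a. (\<Sum>c\<in>A n. \<phi> n c a * h (f c)) \<partial>P)"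
    proof (rule Bochner_Integration.integral_sum[where I="A n" and M=P and f="\<lambda>c a. \<phi> n c a * h (f c)", symmetric])
      fix c assume "c \<in> A n"
      then have "continuous_on UNIV (\<lambda>a. \<phi> n c a * h (f c))"
        using AP[of n] by (intro continuous_on_mult continuous_on_const) auto
      then show "integrable P (\<lambda>a. \<phi> n c a * h (f c))" by (rule intc)
    qed
    finally show ?thesis .
  qed
  have apx: "\<bar>ip h (\<nu> n) - T h\<bar> \<le> nrm h * e n" if h: "h \<in> H" for h n
    unfolding ip\<nu>[OF h] T_def using AP[of n] approx_int(1)[OF _ _ _ _ _ h, of "A n" "\<phi> n" "e n"] by blast
  have cau: "nrm (\<lambda>y. \<nu> m y - \<nu> n y) \<le> e m + e n" for m n
  proof (rule dual)
    show "(\<lambda>y. \<nu> m y - \<nu> n y) \<in> H" by (intro diff_in \<nu>H)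
    show "0 \<le> e m + e n" using epos[of m] epos[of n] by simp
    fix h assume h: "h \<in> H"
    have "ip h (\<lambda>y. \<nu> m y - \<nu> n y) = (ip h (\<nu> m) - T h) - (ip h (\<nu> n) - T h)"
      using h \<nu>H by (simp add: diff_right)
    also have "\<bar>\<dots>\<bar> \<le> nrm h * e m + nrm h * e n" using apx[OF h, of m] apx[OF h, of n] by simp
    finally show "\<bar>ip h (\<lambda>y. \<nu> m y - \<nu> n y)\<bar> \<le> nrm h * (e m + e n)" by (simp add: distrib_left)
  qed
  have emono: "m \<ge> N \<Longrightarrow> e m \<le> e N" for m N unfolding e_def
    by (simp add: le_imp_inverse_le)
  obtain g where gH: "g \<in> H" and conv: "(\<lambda>n. sqrt (ip (\<lambda>y. \<nu> n y - g y) (\<lambda>y. \<nu> n y - g y))) \<longlonglongrightarrow> 0"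
  proof -
    have "\<exists>g\<in>H. (\<lambda>n. sqrt (ip (\<lambda>y. \<nu> n y - g y) (\<lambda>y. \<nu> n y - g y))) \<longlonglongrightarrow> 0"
    proof (rule complete)
      show "\<nu> n \<in> H" for n by (rule \<nu>H)
      fix \<epsilon> :: real assume "\<epsilon> > 0"
      then obtain N where N: "inverse (real (Suc N)) < \<epsilon> / 2" using reals_Archimedean[of "\<epsilon>/2"] by auto
      have "sqrt (ip (\<lambda>y. \<nu> m y - \<nu> n y) (\<lambda>y. \<nu> m y - \<nu> n y)) < \<epsilon>" if "m \<ge> N" "n \<ge> N" for m n
      proof -
        have "sqrt (ip (\<lambda>y. \<nu> m y - \<nu> n y) (\<lambda>y. \<nu> m y - \<nu> n y)) \<le> e m + e n"
          using cau[of m n] unfolding nrm_def .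
        also have "\<dots> \<le> e N + e N" using emono[OF that(1)] emono[OF that(2)] by (rule add_mono)
        also have "\<dots> < \<epsilon>" using N unfolding e_def by simp
        finally show ?thesis .
      qed
      then show "\<exists>N. \<forall>m\<ge>N. \<forall>n\<ge>N. sqrt (ip (\<lambda>y. \<nu> m y - \<nu> n y) (\<lambda>y. \<nu> m y - \<nu> n y)) < \<epsilon>"
        by blast
    qed
    then show ?thesis using that by blast
  qed
  have ipg: "ip h g = T h" if h: "h \<in> H" for h
  proof -
    have bd: "\<bar>ip h g - T h\<bar> \<le> nrm h * e n + nrm h * nrm (\<lambda>y. \<nu> n y - g y)" for n
    proof -
      have "ip h g - T h = (ip h (\<nu> n) - T h) - ip h (\<lambda>y. \<nu> n y - g y)"
        using h \<nu>H gH by (simp add: diff_right)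
      moreover have "\<bar>ip h (\<lambda>y. \<nu> n y - g y)\<bar> \<le> nrm h * nrm (\<lambda>y. \<nu> n y - g y)"
        using h \<nu>H gH by (intro cs diff_in)
      ultimately show ?thesis using apx[OF h, of n] by linarith
    qed
    have e0: "e \<longlonglongrightarrow> 0" unfolding e_def[abs_def] by (rule LIMSEQ_inverse_real_of_nat)
    have "(\<lambda>n. nrm h * e n + nrm h * nrm (\<lambda>y. \<nu> n y - g y)) \<longlonglongrightarrow> nrm h * 0 + nrm h * 0"
      using conv e0 unfolding nrm_def by (intro tendsto_intros)
    then have "\<bar>ip h g - T h\<bar> \<le> 0"
      by (intro LIMSEQ_le_const[of _ _ "\<bar>ip h g - T h\<bar>"]) (use bd in auto)
    then show ?thesis by simp
  qed
  have "g = kme k f P"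
  proof
    fix y
    have "g y = ip (k y) g" using repr[OF gH, of y] sym[OF gH k_in, of y] by simp
    also have "\<dots> = (\<integral>a. k y (f a) \<partial>P)" using ipg[OF k_in] by (simp add: T_def)
    also have "\<dots> = kme k f P y" unfolding kme_def by (simp add: ksym[of y])
    finally show "g y = kme k f P y" .
  qed
  then show ?thesis using gH ipg by (simp add: T_def)
qed

end

lemma wsum_bound: fixes w g :: "nat \<Rightarrow> real"
  assumes "\<And>i. \<bar>g i\<bar> \<le> B" "(\<Sum>i=1..n. \<bar>w i\<bar>) \<le> C" "0 \<le> B"
  shows "\<bar>\<Sum>i=1..n. w i * g i\<bar> \<le> C * B"
proof -
  have "\<bar>\<Sum>i=1..n. w i * g i\<bar> \<le> (\<Sum>i=1..n. \<bar>w i * g i\<bar>)" by (rule sum_abs)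
  also have "\<dots> \<le> (\<Sum>i=1..n. \<bar>w i\<bar> * B)"
    by (rule sum_mono) (simp add: abs_mult assms(1) mult_left_mono)
  also have "\<dots> = (\<Sum>i=1..n. \<bar>w i\<bar>) * B" by (simp add: sum_distrib_right)
  also have "\<dots> \<le> C * B" using assms(2,3) by (rule mult_right_mono)
  finally show ?thesis .
qed

theorem theorem1:
  fixes f :: "'a::t2_space \<Rightarrow> 'b::t2_space"
    and kx :: "'a \<Rightarrow> 'a \<Rightarrow> real" and kz :: "'b \<Rightarrow> 'b \<Rightarrow> real"
    and Hx :: "('a \<Rightarrow> real) set" and ipx :: "('a \<Rightarrow> real) \<Rightarrow> ('a \<Rightarrow> real) \<Rightarrow> real"
    and Hz :: "('b \<Rightarrow> real) set" and ipz :: "('b \<Rightarrow> real) \<Rightarrow> ('b \<Rightarrow> real) \<Rightarrow> real"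
    and P :: "'a measure"
    and x :: "nat \<Rightarrow> nat \<Rightarrow> 'a" and w :: "nat \<Rightarrow> nat \<Rightarrow> real" and C :: real
  assumes "compact (UNIV :: 'a set)" and "compact (UNIV :: 'b set)"
    and "continuous_on UNIV f"
    and "pos_def_kernel kx" and "continuous_on UNIV (\<lambda>(a, b). kx a b)"
    and "pos_def_kernel kz" and "continuous_on UNIV (\<lambda>(a, b). kz a b)"
    and "is_RKHS kx Hx ipx" and "is_RKHS kz Hz ipz"
    and "c0_universal Hx"
    and "prob_space P" and "sets P = sets borel"
    and "\<forall>n. (\<Sum>i=1..n. \<bar>w n i\<bar>) \<le> C"
    and "(\<lambda>n. rkhs_norm ipx (\<lambda>y. kme_est kx id (x n) (w n) n y - kme kx id P y)) \<longlonglongrightarrow> 0"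
  shows "(\<lambda>n. rkhs_norm ipz (\<lambda>z. kme_est kz f (x n) (w n) n z - kme kz f P z)) \<longlonglongrightarrow> 0"
proof -
  note a = assms
  interpret X: rkc kx Hx ipx "id::'a \<Rightarrow> 'a" P
    unfolding rkc_def rkc_axioms_def rkhs_def using a by (simp add: continuous_on_id)
  interpret Z: rkc kz Hz ipz f P
    unfolding rkc_def rkc_axioms_def rkhs_def using a by simp
  define L where "L n g = (\<Sum>i=1..n. w n i * g (x n i))" for n and g :: "'a \<Rightarrow> real"
  have C0: "0 \<le> C" using a(13) by (metis atLeastAtMost_iff not_one_le_zero sum.neutral order_trans order_refl)
  have wC: "(\<Sum>i=1..n. \<bar>w n i\<bar>) \<le> C" for n using a(13) by blast
  have kmex: "kme kx id P \<in> Hx" "\<And>h. h \<in> Hx \<Longrightarrow> ipx h (kme kx id P) = (\<integral>a. h a \<partial>P)"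
    using X.kme_in by auto
  have kmez: "kme kz f P \<in> Hz" "\<And>h. h \<in> Hz \<Longrightarrow> ipz h (kme kz f P) = (\<integral>a. h (f a) \<partial>P)"
    using Z.kme_in by auto
  have B1: "(\<lambda>n. L n h - (\<integral>a. h a \<partial>P)) \<longlonglongrightarrow> 0" if h: "h \<in> Hx" for h
  proof -
    define Dx where "Dx n = (\<lambda>y. kme_est kx id (x n) (w n) n y - kme kx id P y)" for n
    have est: "(\<lambda>y. kme_est kx id (x n) (w n) n y) = (\<lambda>y. \<Sum>i\<in>{1..n}. w n i * kx (x n i) y)" for n
      unfolding kme_est_def by simp
    have estH: "(\<lambda>y. kme_est kx id (x n) (w n) n y) \<in> Hx" for n
      unfolding est by (intro X.sum_in X.k_in) auto
    have DH: "Dx n \<in> Hx" for n unfolding Dx_def by (intro X.diff_in estH kmex)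
    have ipD: "ipx h (Dx n) = L n h - (\<integral>a. h a \<partial>P)" for n
    proof -
      have "ipx h (Dx n) = ipx h (\<lambda>y. kme_est kx id (x n) (w n) n y) - ipx h (kme kx id P)"
        unfolding Dx_def by (intro X.diff_right estH kmex h)
      also have "ipx h (\<lambda>y. kme_est kx id (x n) (w n) n y) = (\<Sum>i\<in>{1..n}. w n i * ipx h (kx (x n i)))"
        unfolding est by (intro X.sum_right X.k_in h) auto
      also have "\<dots> = L n h" unfolding L_def using h by (simp add: X.repr)
      finally show ?thesis using kmex(2)[OF h] by (simp add: id_def)
    qed
    have nr: "rkhs_norm ipx (Dx n) = X.nrm (Dx n)" for n unfolding rkhs_norm_def X.nrm_def ..
    have t: "(\<lambda>n. X.nrm h * X.nrm (Dx n)) \<longlonglongrightarrow> 0"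
      using a(14) unfolding Dx_def[symmetric] nr by (rule tendsto_mult_right_zero)
    show ?thesis
      by (rule Lim_null_comparison[OF _ t]) (use X.cs[OF h DH] ipD in auto)
  qed
  have B2: "(\<lambda>n. L n g - (\<integral>a. g a \<partial>P)) \<longlonglongrightarrow> 0" if g: "continuous_on UNIV g" for g
  proof (rule LIMSEQ_I)
    fix r :: real assume r: "0 < r"
    define \<delta> where "\<delta> = r / (C + 3)"
    have dpos: "\<delta> > 0" unfolding \<delta>_def using r C0 by simp
    have "g \<in> C0_functions" unfolding C0_functions_def using g a(1) by auto
    then obtain h where h: "h \<in> Hx" and gh: "\<And>y. \<bar>g y - h y\<bar> < \<delta>"
      using a(10) dpos unfolding c0_universal_def by blast
    obtain N where N: "\<And>n. n \<ge> N \<Longrightarrow> norm (L n h - (\<integral>a. h a \<partial>P) - 0) < \<delta>"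
      using LIMSEQ_D[OF B1[OF h] dpos] by blast
    have ig: "integrable P g" by (rule X.intc[OF g])
    have ih: "integrable P h" using X.intH[OF h] by simp
    have "norm (L n g - (\<integral>a. g a \<partial>P) - 0) < r" if n: "n \<ge> N" for n
    proof -
      have e1: "\<bar>L n g - L n h\<bar> \<le> C * \<delta>"
      proof -
        have "L n g - L n h = (\<Sum>i=1..n. w n i * (g (x n i) - h (x n i)))"
          unfolding L_def by (simp add: sum_subtractf right_diff_distrib)
        also have "\<bar>\<dots>\<bar> \<le> C * \<delta>"
          by (rule wsum_bound[OF _ wC]) (use gh dpos in \<open>auto simp: less_imp_le\<close>)
        finally show ?thesis .
      qed
      have e2: "\<bar>(\<integral>a. h a \<partial>P) - (\<integral>a. g a \<partial>P)\<bar> \<le> \<delta>"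
      proof -
        have "(\<integral>a. h a \<partial>P) - (\<integral>a. g a \<partial>P) = (\<integral>a. h a - g a \<partial>P)" using ig ih by simp
        also have "\<bar>\<dots>\<bar> \<le> \<delta>"
          by (rule int_bound[OF a(11)]) (use ig ih gh in \<open>auto simp: abs_minus_commute less_imp_le\<close>)
        finally show ?thesis .
      qed
      have e3: "\<bar>L n h - (\<integral>a. h a \<partial>P)\<bar> < \<delta>" using N[OF n] by simp
      have "\<bar>L n g - (\<integral>a. g a \<partial>P)\<bar> < C * \<delta> + \<delta> + \<delta>" using e1 e2 e3 by linarith
      also have "\<dots> = (C + 2) * \<delta>" by (simp add: algebra_simps)
      also have "\<dots> < (C + 3) * \<delta>" using dpos by simp
      also have "\<dots> = r" unfolding \<delta>_def using C0 by simp
      finally show ?thesis by simp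
    qed
    then show "\<exists>N. \<forall>n\<ge>N. norm (L n g - (\<integral>a. g a \<partial>P) - 0) < r" by blast
  qed
  define Ez where "Ez n = (\<lambda>z. kme_est kz f (x n) (w n) n z - kme kz f P z)" for n
  have estz: "(\<lambda>z. kme_est kz f (x n) (w n) n z) = (\<lambda>z. \<Sum>i\<in>{1..n}. w n i * kz (f (x n i)) z)" for n
    unfolding kme_est_def by simp
  have estzH: "(\<lambda>z. kme_est kz f (x n) (w n) n z) \<in> Hz" for n
    unfolding estz by (intro Z.sum_in Z.k_in) auto
  have EH: "Ez n \<in> Hz" for n unfolding Ez_def by (intro Z.diff_in estzH kmez)
  have ipE: "ipz h (Ez n) = L n (\<lambda>a. h (f a)) - (\<integral>a. h (f a) \<partial>P)" if h: "h \<in> Hz" for h n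
  proof -
    have "ipz h (Ez n) = ipz h (\<lambda>z. kme_est kz f (x n) (w n) n z) - ipz h (kme kz f P)"
      unfolding Ez_def by (intro Z.diff_right estzH kmez h)
    also have "ipz h (\<lambda>z. kme_est kz f (x n) (w n) n z) = (\<Sum>i\<in>{1..n}. w n i * ipz h (kz (f (x n i))))"
      unfolding estz by (intro Z.sum_right Z.k_in h) auto
    also have "\<dots> = L n (\<lambda>a. h (f a))" unfolding L_def using h by (simp add: Z.repr)
    finally show ?thesis using kmez(2)[OF h] by simp
  qed
  have nrz: "rkhs_norm ipz (Ez n) = Z.nrm (Ez n)" for n unfolding rkhs_norm_def Z.nrm_def ..
  have "(\<lambda>n. Z.nrm (Ez n)) \<longlonglongrightarrow> 0"
  proof (rule LIMSEQ_I)
    fix r :: real assume r: "0 < r"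
    define \<delta> where "\<delta> = r / (C + 3)"
    have dpos: "\<delta> > 0" unfolding \<delta>_def using r C0 by simp
    obtain A and \<phi> :: "'a \<Rightarrow> 'a \<Rightarrow> real" where AP: "finite A" "\<forall>c\<in>A. continuous_on UNIV (\<phi> c)" "\<forall>c a. 0 \<le> \<phi> c a"
     "\<forall>a. (\<Sum>c\<in>A. \<phi> c a) = 1" "\<forall>c a. 0 < \<phi> c a \<longrightarrow> Z.D c a < \<delta>"
      using Z.PUf[OF dpos] by blast
    define s where "s n = (\<Sum>c\<in>A. Z.nrm (kz (f c)) * \<bar>L n (\<phi> c) - (\<integral>a. \<phi> c a \<partial>P)\<bar>)" for n
    have "s \<longlonglongrightarrow> (\<Sum>c\<in>A. Z.nrm (kz (f c)) * 0)" unfolding s_def[abs_def]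
      using AP(2) B2 by (intro tendsto_sum tendsto_mult tendsto_const tendsto_rabs_zero) auto
    then have "s \<longlonglongrightarrow> 0" by simp
    then obtain N where N: "\<And>n. n \<ge> N \<Longrightarrow> norm (s n - 0) < \<delta>"
      using LIMSEQ_D dpos by blast
    have "norm (Z.nrm (Ez n) - 0) < r" if n: "n \<ge> N" for n
    proof -
      have sn: "s n < \<delta>" using N[OF n] by simp
      have bound: "Z.nrm (Ez n) \<le> (C + 2) * \<delta>"
      proof (rule Z.dual[OF EH])
        show "0 \<le> (C + 2) * \<delta>" using C0 dpos by simp
        fix h assume h: "h \<in> Hz"
        define \<psi> where "\<psi> a = (\<Sum>c\<in>A. \<phi> c a * h (f c))" for a
        have nh: "0 \<le> Z.nrm h" by (rule Z.nrm_nonneg[OF h])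
        have up: "\<bar>h (f a) - \<psi> a\<bar> \<le> Z.nrm h * \<delta>" for a
          unfolding \<psi>_def using PU_approx[OF AP(1,3,4,5) nh, of "\<lambda>a. h (f a)" a] Z.keyf[OF h] by simp
        have f1: "\<bar>L n (\<lambda>a. h (f a)) - L n \<psi>\<bar> \<le> C * (Z.nrm h * \<delta>)"
        proof -
          have "L n (\<lambda>a. h (f a)) - L n \<psi> = (\<Sum>i=1..n. w n i * (h (f (x n i)) - \<psi> (x n i)))"
            unfolding L_def by (simp add: sum_subtractf right_diff_distrib)
          also have "\<bar>\<dots>\<bar> \<le> C * (Z.nrm h * \<delta>)"
            by (rule wsum_bound[OF _ wC]) (use up nh dpos in auto)
          finally show ?thesis .
        qed
        have ipsi: "integrable P \<psi>" "\<bar>(\<integral>a. \<psi> a \<partial>P) - (\<integral>a. h (f a) \<partial>P)\<bar> \<le> Z.nrm h * \<delta>"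
          unfolding \<psi>_def using Z.approx_int[OF AP h] by auto
        have Lpsi: "L n \<psi> = (\<Sum>c\<in>A. h (f c) * L n (\<phi> c))"
        proof -
          have "L n \<psi> = (\<Sum>i=1..n. \<Sum>c\<in>A. h (f c) * (w n i * \<phi> c (x n i)))"
            unfolding L_def \<psi>_def by (simp add: sum_distrib_left mult_ac)
          also have "\<dots> = (\<Sum>c\<in>A. \<Sum>i=1..n. h (f c) * (w n i * \<phi> c (x n i)))" by (rule sum.swap)
          also have "\<dots> = (\<Sum>c\<in>A. h (f c) * L n (\<phi> c))" unfolding L_def by (simp add: sum_distrib_left)
          finally show ?thesis .
        qed
        have Ipsi: "(\<integral>a. \<psi> a \<partial>P) = (\<Sum>c\<in>A. h (f c) * (\<integral>a. \<phi> c a \<partial>P))"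
        proof -
          have "(\<integral>a. \<psi> a \<partial>P) = (\<Sum>c\<in>A. (\<integral>a. \<phi> c a * h (f c) \<partial>P))"
            unfolding \<psi>_def
          proof (rule Bochner_Integration.integral_sum[where I=A and M=P and f="\<lambda>c a. \<phi> c a * h (f c)"])
            fix c assume "c \<in> A"
            then have "continuous_on UNIV (\<lambda>a. \<phi> c a * h (f c))"
              using AP(2) by (intro continuous_on_mult continuous_on_const) auto
            then show "integrable P (\<lambda>a. \<phi> c a * h (f c))" by (rule Z.intc)
          qed
          then show ?thesis by (simp add: mult.commute)
        qed
        have f2: "\<bar>L n \<psi> - (\<integral>a. \<psi> a \<partial>P)\<bar> \<le> Z.nrm h * \<delta>"
        proof -
          have "L n \<psi> - (\<integral>a. \<psi> a \<partial>P) = (\<Sum>c\<in>A. h (f c) * (L n (\<phi> c) - (\<integral>a. \<phi> c a \<partial>P)))"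
            unfolding Lpsi Ipsi by (simp add: sum_subtractf right_diff_distrib)
          also have "\<bar>\<dots>\<bar> \<le> (\<Sum>c\<in>A. \<bar>h (f c) * (L n (\<phi> c) - (\<integral>a. \<phi> c a \<partial>P))\<bar>)" by (rule sum_abs)
          also have "\<dots> \<le> (\<Sum>c\<in>A. Z.nrm h * (Z.nrm (kz (f c)) * \<bar>L n (\<phi> c) - (\<integral>a. \<phi> c a \<partial>P)\<bar>))"
          proof (rule sum_mono)
            fix c assume "c \<in> A"
            have "\<bar>h (f c)\<bar> \<le> Z.nrm h * Z.nrm (kz (f c))"
              using Z.cs[OF h Z.k_in, of "f c"] Z.repr[OF h, of "f c"] by simp
            then show "\<bar>h (f c) * (L n (\<phi> c) - (\<integral>a. \<phi> c a \<partial>P))\<bar>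
               \<le> Z.nrm h * (Z.nrm (kz (f c)) * \<bar>L n (\<phi> c) - (\<integral>a. \<phi> c a \<partial>P)\<bar>)"
              by (simp add: abs_mult mult.assoc[symmetric] mult_right_mono)
          qed
          also have "\<dots> = Z.nrm h * s n" unfolding s_def by (simp add: sum_distrib_left)
          also have "\<dots> \<le> Z.nrm h * \<delta>" using sn nh by (simp add: mult_left_mono)
          finally show ?thesis .
        qed
        have "\<bar>ipz h (Ez n)\<bar> \<le> C * (Z.nrm h * \<delta>) + Z.nrm h * \<delta> + Z.nrm h * \<delta>"
          unfolding ipE[OF h] using f1 f2 ipsi(2) by linarith
        also have "\<dots> = Z.nrm h * ((C + 2) * \<delta>)" by (simp add: algebra_simps)
        finally show "\<bar>ipz h (Ez n)\<bar> \<le> Z.nrm h * ((C + 2) * \<delta>)" .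
      qed
      also have "(C + 2) * \<delta> < (C + 3) * \<delta>" using dpos by simp
      also have "\<dots> = r" unfolding \<delta>_def using C0 by simp
      finally show ?thesis using Z.nrm_nonneg[OF EH] by simp
    qed
    then show "\<exists>N. \<forall>n\<ge>N. norm (Z.nrm (Ez n) - 0) < r" by blast
  qed
  then show ?thesis unfolding Ez_def[symmetric] nrz .
qed


end
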